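(* For any single-player extensive-form game $\Gamma$, $$\mathrm{VoR}^{\mathrm{opt}}(\Gamma)=\mathrm{VoR}^{\mathrm{bEDT}}(\Gamma)=\mathrm{VoR}^{\mathrm{bCDT}}(\Gamma)\ge 1.$$
   Context: A single-player extensive-form game consists of a finite rooted tree (nodes $\mathcal H$, leaves $\mathcal Z$, actions $A_h$), nonterminal nodes belonging to Player 1 or to chance (chance having fixed action distributions), utility $u_1:\mathcal Z\to\mathbb R_{\ge0}$, and a partition $\mathcal I_1$ of Player 1's nodes into infosets with common action sets $A_I$. A behavioral strategy $\pi$ assigns $\pi(\cdot\mid I)\in\Delta(A_I)$ to each infoset; $U_1(\pi)=\sum_z\mathbb P(z\mid\pi)u_1(z)$, with $\mathbb P(z\mid\pi)$ the reach probability. $u_1(\mathrm{opt}(\Gamma))=\max_\pi U_1(\pi)$. $\pi^{I\mapsto\sigma}$ plays $\sigma$ at $I$ and as $\pi$ elsewhere. $\pi$ is an EDT equilibrium if for all $I$, $\pi(\cdot\mid I)\in\arg\max_{\sigma\in\Delta(A_I)}U_1(\pi^{I\mapsto\sigma})$; a CDT equilibrium if $\pi$ is a Karush–Kuhn–Tucker point of maximizing $U_1$ over $\prod_I\Delta(A_I)$. $u_1(\mathrm{bEDT}(\Gamma))$, $u_1(\mathrm{bCDT}(\Gamma))$ are the maxima of $U_1$ over EDT resp. CDT equilibria. For a node $h$, $\mathrm{obs}_1(h)$ is the sequence of (infoset, action) pairs at Player 1's nodes on the root-to-$h$ path (excluding $h$); $\mathrm{pr}_1(\Gamma)$ has the same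 tree and utilities, with each infoset partitioned into the classes of $h\sim h'\iff\mathrm{obs}_1(h)=\mathrm{obs}_1(h')$. $\mathrm{VoR}^{\mathrm{SC}}(\Gamma)=u_1(\mathrm{SC}(\mathrm{pr}_1(\Gamma)))/u_1(\mathrm{SC}(\Gamma))$. *)

theory Defs
  imports "HOL-Analysis.Analysis"
begin

text \<open>Nodes are histories (lists of actions
  taken from the root); the tree is a finite prefix-closed set of histories.
  Nonterminal nodes either belong to chance (flag chance) or to Player 1.
  Player 1's nodes carry an infoset label via info.\<close>

record ('a, 'i) game =
  nodes  :: "'a list set"
  chance :: "'a list \<Rightarrow> bool"
  cprob  :: "'a list \<Rightarrow> 'a \<Rightarrow> real"
  info   :: "'a list \<Rightarrow> 'i"
  util   :: "'a list \<Rightarrow> real"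

definition acts :: "('a, 'i) game \<Rightarrow> 'a list \<Rightarrow> 'a set" where
  "acts G h = {a. h @ [a] \<in> nodes G}"

definition leaves :: "('a, 'i) game \<Rightarrow> 'a list set" where
  "leaves G = {h \<in> nodes G. acts G h = {}}"

definition p1nodes :: "('a, 'i) game \<Rightarrow> 'a list set" where
  "p1nodes G = {h \<in> nodes G. acts G h \<noteq> {} \<and> \<not> chance G h}"

definition infosets :: "('a, 'i) game \<Rightarrow> 'i set" where
  "infosets G = info G ` p1nodes G"

definition infoacts :: "('a, 'i) game \<Rightarrow> 'i \<Rightarrow> 'a set" where
  "infoacts G I = (\<Union>h \<in> {h \<in> p1nodes G. info G h = I}. acts G h)"

definition distrib_on :: "'a set \<Rightarrow> ('a \<Rightarrow> real) set" where
  "distrib_on A = {\<sigma>. (\<forall>a\<in>A. 0 \<le> \<sigma> a) \<and> sum \<sigma> A = 1}"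

definition wf_game :: "('a, 'i) game \<Rightarrow> bool" where
  "wf_game G \<longleftrightarrow>
     finite (nodes G) \<and> [] \<in> nodes G \<and>
     (\<forall>h a. h @ [a] \<in> nodes G \<longrightarrow> h \<in> nodes G) \<and>
     (\<forall>h \<in> nodes G. acts G h \<noteq> {} \<and> chance G h \<longrightarrow>
        cprob G h \<in> distrib_on (acts G h)) \<and>
     (\<forall>h \<in> p1nodes G. \<forall>h' \<in> p1nodes G. info G h = info G h' \<longrightarrow> acts G h = acts G h') \<and>
     (\<forall>z \<in> leaves G. 0 \<le> util G z)"

definition strategies :: "('a, 'i) game \<Rightarrow> ('i \<Rightarrow> 'a \<Rightarrow> real) set" where
  "strategies G = {\<pi>. \<forall>I \<in> infosets G. \<pi> I \<in> distrib_on (infoacts G I)}"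

definition reach :: "('a, 'i) game \<Rightarrow> ('i \<Rightarrow> 'a \<Rightarrow> real) \<Rightarrow> 'a list \<Rightarrow> real" where
  "reach G \<pi> z = (\<Prod>k < length z.
      if chance G (take k z) then cprob G (take k z) (z ! k) else \<pi> (info G (take k z)) (z ! k))"

definition U :: "('a, 'i) game \<Rightarrow> ('i \<Rightarrow> 'a \<Rightarrow> real) \<Rightarrow> real" where
  "U G \<pi> = (\<Sum>z \<in> leaves G. reach G \<pi> z * util G z)"

definition u_opt :: "('a, 'i) game \<Rightarrow> real" where
  "u_opt G = Sup (U G ` strategies G)"

definition EDT_eq :: "('a, 'i) game \<Rightarrow> ('i \<Rightarrow> 'a \<Rightarrow> real) \<Rightarrow> bool" where
  "EDT_eq G \<pi> \<longleftrightarrow> \<pi> \<in> strategies G \<and>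
     (\<forall>I \<in> infosets G. \<forall>\<sigma> \<in> distrib_on (infoacts G I). U G (\<pi>(I := \<sigma>)) \<le> U G \<pi>)"

definition pdU :: "('a, 'i) game \<Rightarrow> ('i \<Rightarrow> 'a \<Rightarrow> real) \<Rightarrow> 'i \<Rightarrow> 'a \<Rightarrow> real" where
  "pdU G \<pi> I a = deriv (\<lambda>t. U G (\<pi>(I := (\<pi> I)(a := t)))) (\<pi> I a)"

text \<open>KKT point of maximizing U over the product of simplices
  (constraints -x(a|I) \<le> 0 with multipliers \<mu>, \<Sum>_a x(a|I) = 1 with multiplier \<lambda>).\<close>

definition CDT_eq :: "('a, 'i) game \<Rightarrow> ('i \<Rightarrow> 'a \<Rightarrow> real) \<Rightarrow> bool" where
  "CDT_eq G \<pi> \<longleftrightarrow> \<pi> \<in> strategies G \<and>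
     (\<forall>I \<in> infosets G. \<exists>lam::real. \<exists>\<mu>::'a \<Rightarrow> real. \<forall>a \<in> infoacts G I.
        0 \<le> \<mu> a \<and> \<mu> a * \<pi> I a = 0 \<and> pdU G \<pi> I a + \<mu> a = lam)"

definition u_bEDT :: "('a, 'i) game \<Rightarrow> real" where
  "u_bEDT G = Sup (U G ` {\<pi>. EDT_eq G \<pi>})"

definition u_bCDT :: "('a, 'i) game \<Rightarrow> real" where
  "u_bCDT G = Sup (U G ` {\<pi>. CDT_eq G \<pi>})"

definition obs :: "('a, 'i) game \<Rightarrow> 'a list \<Rightarrow> ('i \<times> 'a) list" where
  "obs G h = map (\<lambda>k. (info G (take k h), h ! k))
               (filter (\<lambda>k. \<not> chance G (take k h)) [0..<length h])"

definition pr1 :: "('a, 'i) game \<Rightarrow> ('a, 'i \<times> ('i \<times> 'a) list) game" where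
  "pr1 G = \<lparr> nodes = nodes G, chance = chance G, cprob = cprob G,
             info = (\<lambda>h. (info G h, obs G h)), util = util G \<rparr>"

definition VoR_opt :: "('a, 'i) game \<Rightarrow> real" where
  "VoR_opt G = u_opt (pr1 G) / u_opt G"

definition VoR_bEDT :: "('a, 'i) game \<Rightarrow> real" where
  "VoR_bEDT G = u_bEDT (pr1 G) / u_bEDT G"

definition VoR_bCDT :: "('a, 'i) game \<Rightarrow> real" where
  "VoR_bCDT G = u_bCDT (pr1 G) / u_bCDT G"

end

theory Submission
  imports Defs
begin

lemma prefix_closed:
  assumes "wf_game G"
  shows "h @ ys \<in> nodes G \<Longrightarrow> h \<in> nodes G"
proof (induction ys rule: rev_induct)
  case Nil then show ?case by simp
next
  case (snoc y ys)
  then show ?case using assms unfolding wf_game_def by (metis append_assoc)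
qed

lemma leaf_step:
  assumes "wf_game G" "z \<in> nodes G" "k < length z"
  shows "take k z \<in> nodes G \<and> z ! k \<in> acts G (take k z)"
proof -
  have "take (Suc k) z \<in> nodes G"
    using prefix_closed[OF assms(1), of "take (Suc k) z" "drop (Suc k) z"] assms(2) by simp
  moreover have "take (Suc k) z = take k z @ [z ! k]"
    using assms(3) by (simp add: take_Suc_conv_app_nth)
  ultimately show ?thesis
    using prefix_closed[OF assms(1)] by (auto simp: acts_def)
qed

lemma leaf_p1:
  assumes "wf_game G" "z \<in> leaves G" "k < length z" "\<not> chance G (take k z)"
  shows "info G (take k z) \<in> infosets G \<and> z ! k \<in> infoacts G (info G (take k z))"
proof -
  have z: "z \<in> nodes G" using assms(2) by (simp add: leaves_def)
  from leaf_step[OF assms(1) z assms(3)]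
  have "take k z \<in> p1nodes G" "z ! k \<in> acts G (take k z)"
    using assms(4) by (auto simp: p1nodes_def)
  then show ?thesis by (auto simp: infosets_def infoacts_def)
qed

lemma finite_leaves: "wf_game G \<Longrightarrow> finite (leaves G)"
  unfolding wf_game_def leaves_def by auto

lemma finite_acts:
  assumes "wf_game G" shows "finite (acts G h)"
proof -
  have "acts G h \<subseteq> last ` nodes G" unfolding acts_def by force
  moreover have "finite (nodes G)" using assms by (simp add: wf_game_def)
  ultimately show ?thesis by (meson finite_surj)
qed

lemma infoacts_eq:
  assumes "wf_game G" "h \<in> p1nodes G"
  shows "infoacts G (info G h) = acts G h"
proof -
  from assms(1) have c: "\<forall>h\<in>p1nodes G. \<forall>h'\<in>p1nodes G. info G h = info G h' \<longrightarrow> acts G h = acts G h'"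
    unfolding wf_game_def by (elim conjE) assumption
  show ?thesis unfolding infoacts_def
  proof
    show "(\<Union>h'\<in>{h' \<in> p1nodes G. info G h' = info G h}. acts G h') \<subseteq> acts G h"
    proof
      fix a assume "a \<in> (\<Union>h'\<in>{h' \<in> p1nodes G. info G h' = info G h}. acts G h')"
      then obtain h' where h': "h' \<in> p1nodes G" "info G h' = info G h" "a \<in> acts G h'"
        by blast
      have "acts G h' = acts G h" using c[rule_format, OF h'(1) assms(2) h'(2)] .
      then show "a \<in> acts G h" using h'(3) by simp
    qed
    show "acts G h \<subseteq> (\<Union>h'\<in>{h' \<in> p1nodes G. info G h' = info G h}. acts G h')"
      by (rule UN_upper) (simp add: assms(2))
  qed
qed

lemma infoacts_fin_ne:
  assumes "wf_game G" "I \<in> infosets G"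
  shows "finite (infoacts G I) \<and> infoacts G I \<noteq> {}"
proof -
  obtain h where h: "h \<in> p1nodes G" "I = info G h" using assms(2) by (auto simp: infosets_def)
  then show ?thesis using infoacts_eq[OF assms(1) h(1)] finite_acts[OF assms(1)]
    by (auto simp: p1nodes_def)
qed

lemma U_cong:
  assumes "wf_game G" "\<And>I a. I \<in> infosets G \<Longrightarrow> a \<in> infoacts G I \<Longrightarrow> \<pi> I a = \<pi>' I a"
  shows "U G \<pi> = U G \<pi>'"
  unfolding U_def reach_def
proof (intro sum.cong refl arg_cong2[where f="(*)"] prod.cong)
  fix z k assume z: "z \<in> leaves G" and k: "k \<in> {..<length z}"
  show "(if chance G (take k z) then cprob G (take k z) (z ! k) else \<pi> (info G (take k z)) (z ! k)) =
        (if chance G (take k z) then cprob G (take k z) (z ! k) else \<pi>' (info G (take k z)) (z ! k))"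
  proof (cases "chance G (take k z)")
    case False
    with leaf_p1[OF assms(1) z] k
    have "info G (take k z) \<in> infosets G" "z ! k \<in> infoacts G (info G (take k z))" by auto
    then show ?thesis using False assms(2) by simp
  qed simp
qed


lemma cont_coord: "continuous_on UNIV (\<lambda>\<pi>::'i \<Rightarrow> 'a \<Rightarrow> real. \<pi> I a)"
  using continuous_on_product_then_coordinatewise[OF continuous_on_product_coordinates[of I]] .

lemma cont_U: "continuous_on UNIV (U G)"
proof -
  have f: "continuous_on UNIV (\<lambda>\<pi>. if chance G (take k z) then cprob G (take k z) (z ! k)
            else \<pi> (info G (take k z)) (z ! k))" for k z
    by (cases "chance G (take k z)") (auto simp: cont_coord)
  show ?thesis unfolding U_def reach_def
    by (intro continuous_on_sum continuous_on_mult continuous_on_prod f continuous_on_const)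
qed

lemma compact_Pi_UNIV:
  fixes S :: "'i \<Rightarrow> ('b::topological_space) set"
  assumes "\<And>i. compact (S i)"
  shows "compact (Pi UNIV S)"
proof -
  have "compactin (product_topology (\<lambda>i. euclidean) UNIV) (PiE UNIV S)"
    using assms by (simp add: compactin_PiE)
  then show ?thesis by (simp add: euclidean_product_topology PiE_UNIV_domain)
qed

lemma exists_max:
  fixes G :: "('a, 'i) game"
  assumes wf: "wf_game G"
  shows "\<exists>\<pi>m\<in>strategies G. \<forall>\<pi>\<in>strategies G. U G \<pi> \<le> U G \<pi>m"
proof -
  define P where "P I a \<longleftrightarrow> I \<in> infosets G \<and> a \<in> infoacts G I" for I a
  define K where "K I a = (if P I a then {0..1::real} else {0})" for I a
  define Box where "Box = Pi UNIV (\<lambda>I. Pi UNIV (K I))"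
  define C where "C = {\<pi>::'i \<Rightarrow> 'a \<Rightarrow> real. \<forall>I\<in>infosets G. sum (\<pi> I) (infoacts G I) = (1::real)}"
  define S where "S = Box \<inter> C"
  define r where "r \<pi> = (\<lambda>I a. if P I a then \<pi> I a else 0)" for \<pi> :: "'i \<Rightarrow> 'a \<Rightarrow> real"
  have "compact Box" unfolding Box_def
    by (intro compact_Pi_UNIV) (auto simp: K_def)
  moreover have "closed C"
  proof -
    have "C = (\<Inter>I\<in>infosets G. {\<pi>. sum (\<pi> I) (infoacts G I) = 1})" by (auto simp: C_def)
    moreover have "closed {\<pi>::'i \<Rightarrow> 'a \<Rightarrow> real. sum (\<pi> I) (infoacts G I) = 1}" for I
      by (intro closed_Collect_eq continuous_on_sum cont_coord continuous_on_const)
    ultimately show ?thesis by (simp add: closed_INT)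
  qed
  ultimately have cS: "compact S" unfolding S_def by (rule compact_Int_closed)
  have rS: "r \<pi> \<in> S" if "\<pi> \<in> strategies G" for \<pi>
  proof -
    have "r \<pi> I a \<in> K I a" for I a
    proof (cases "P I a")
      case True
      then have I: "I \<in> infosets G" "a \<in> infoacts G I" by (auto simp: P_def)
      with that have d: "\<pi> I \<in> distrib_on (infoacts G I)" by (auto simp: strategies_def)
      have "\<pi> I a \<le> sum (\<pi> I) (infoacts G I)"
        using d I infoacts_fin_ne[OF wf I(1)] by (intro member_le_sum) (auto simp: distrib_on_def)
      then show ?thesis using d I True by (auto simp: K_def r_def distrib_on_def)
    qed (auto simp: K_def r_def)
    moreover have "sum (r \<pi> I) (infoacts G I) = 1" if "I \<in> infosets G" for I
    proof -
      have "sum (r \<pi> I) (infoacts G I) = sum (\<pi> I) (infoacts G I)"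
        using that by (intro sum.cong) (auto simp: r_def P_def)
      then show ?thesis using \<open>\<pi> \<in> strategies G\<close> that by (auto simp: strategies_def distrib_on_def)
    qed
    ultimately show ?thesis by (auto simp: S_def Box_def C_def)
  qed
  have Ur: "U G (r \<pi>) = U G \<pi>" for \<pi>
    by (rule U_cong[OF wf]) (auto simp: r_def P_def)
  have Sstr: "S \<subseteq> strategies G"
  proof
    fix \<pi> assume "\<pi> \<in> S"
    then have Km: "\<pi> I a \<in> K I a" and sm: "\<forall>I\<in>infosets G. sum (\<pi> I) (infoacts G I) = 1" for I a
      by (auto simp: S_def Box_def C_def)
    have "0 \<le> \<pi> I a" if "I \<in> infosets G" "a \<in> infoacts G I" for I a
      using that Km[of I a] by (simp add: K_def P_def)
    then show "\<pi> \<in> strategies G"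
      unfolding strategies_def distrib_on_def using sm by blast
  qed
  define \<pi>0 where "\<pi>0 I = (\<lambda>a. if a = (SOME a. a \<in> infoacts G I) then 1 else (0::real))" for I
  have "\<pi>0 \<in> strategies G"
  proof -
    have "\<pi>0 I \<in> distrib_on (infoacts G I)" if "I \<in> infosets G" for I
    proof -
      define a0 where "a0 = (SOME a. a \<in> infoacts G I)"
      from infoacts_fin_ne[OF wf that] obtain b where "b \<in> infoacts G I" by blast
      then have a0: "a0 \<in> infoacts G I" unfolding a0_def by (rule someI)
      have fin: "finite (infoacts G I)" using infoacts_fin_ne[OF wf that] by blast
      have e: "\<pi>0 I = (\<lambda>a. if a = a0 then 1 else 0)" by (simp add: \<pi>0_def a0_def)
      have "sum (\<pi>0 I) (infoacts G I) = 1" unfolding e using fin a0 by (simp add: sum.delta')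
      then show ?thesis unfolding distrib_on_def by (simp add: e)
    qed
    then show ?thesis by (auto simp: strategies_def)
  qed
  then have "S \<noteq> {}" using rS by blast
  moreover have "continuous_on S (U G)" using cont_U by (rule continuous_on_subset) simp
  ultimately obtain \<pi>m where pm: "\<pi>m \<in> S" and mx: "\<forall>y\<in>S. U G y \<le> U G \<pi>m"
    using continuous_attains_sup[OF cS] by blast
  show ?thesis
  proof (intro bexI ballI)
    show "\<pi>m \<in> strategies G" using Sstr pm by blast
    fix \<pi> assume "\<pi> \<in> strategies G"
    then have "U G (r \<pi>) \<le> U G \<pi>m" using rS mx by blast
    then show "U G \<pi> \<le> U G \<pi>m" using Ur by simp
  qed
qed


definition fac :: "('a, 'i) game \<Rightarrow> ('i \<Rightarrow> 'a \<Rightarrow> real) \<Rightarrow> 'a list \<Rightarrow> nat \<Rightarrow> real" where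
  "fac G \<pi> z k = (if chance G (take k z) then cprob G (take k z) (z ! k)
                   else \<pi> (info G (take k z)) (z ! k))"

definition bet :: "('a, 'i) game \<Rightarrow> 'i \<Rightarrow> ('a \<Rightarrow> real) \<Rightarrow> 'a list \<Rightarrow> nat \<Rightarrow> real" where
  "bet G I d z k = (if \<not> chance G (take k z) \<and> info G (take k z) = I then d (z ! k) else 0)"

definition DD :: "('a, 'i) game \<Rightarrow> ('i \<Rightarrow> 'a \<Rightarrow> real) \<Rightarrow> 'i \<Rightarrow> ('a \<Rightarrow> real) \<Rightarrow> real" where
  "DD G \<pi> I d = (\<Sum>z\<in>leaves G. (\<Sum>k<length z. bet G I d z k *
       (\<Prod>j\<in>{..<length z}-{k}. fac G \<pi> z j)) * util G z)"

lemma U_fac: "U G \<pi> = (\<Sum>z\<in>leaves G. (\<Prod>k<length z. fac G \<pi> z k) * util G z)"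
  unfolding U_def reach_def fac_def by simp

lemma fac_line: "fac G (\<pi>(I := \<lambda>c. x c + s * d c)) z k = fac G (\<pi>(I := x)) z k + s * bet G I d z k"
  by (auto simp: fac_def bet_def)

lemma DERIV_prod_affine:
  "((\<lambda>s. \<Prod>k\<in>K. a k + s * b k) has_real_derivative
     (\<Sum>k\<in>K. b k * (\<Prod>j\<in>K-{k}. a j + s0 * b j))) (at s0)"
proof -
  have d: "((\<lambda>s. a k + s * b k) has_derivative (\<lambda>y. y * b k)) (at s0)" for k
    by (auto intro!: derivative_eq_intros)
  have "((\<lambda>s. \<Prod>k\<in>K. a k + s * b k) has_derivative
          (\<lambda>y. \<Sum>k\<in>K. (y * b k) * (\<Prod>j\<in>K-{k}. a j + s0 * b j))) (at s0)"
    by (rule has_derivative_prod) (rule d)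
  then show ?thesis unfolding has_field_derivative_def
    by (rule has_derivative_eq_rhs) (auto simp: sum_distrib_left algebra_simps intro!: ext)
qed

lemma U_line_deriv:
  "((\<lambda>s. U G (\<pi>(I := \<lambda>c. x c + s * d c))) has_real_derivative
      DD G (\<pi>(I := \<lambda>c. x c + s0 * d c)) I d) (at s0)"
proof -
  have eq: "(\<lambda>s. U G (\<pi>(I := \<lambda>c. x c + s * d c))) =
     (\<lambda>s. \<Sum>z\<in>leaves G. (\<Prod>k<length z. fac G (\<pi>(I := x)) z k + s * bet G I d z k) * util G z)"
    by (simp add: U_fac fac_line)
  have "((\<lambda>s. \<Sum>z\<in>leaves G. (\<Prod>k<length z. fac G (\<pi>(I := x)) z k + s * bet G I d z k) * util G z)
     has_real_derivative (\<Sum>z\<in>leaves G. (\<Sum>k<length z. bet G I d z k *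
        (\<Prod>j\<in>{..<length z}-{k}. fac G (\<pi>(I := x)) z j + s0 * bet G I d z j)) * util G z)) (at s0)"
    by (intro DERIV_sum DERIV_cmult_right DERIV_prod_affine)
  then show ?thesis unfolding eq DD_def by (simp add: fac_line)
qed

lemma pdU_DD: "pdU G \<pi> I a = DD G \<pi> I (\<lambda>c. if c = a then 1 else 0)"
proof -
  define x where "x = (\<pi> I)(a := 0)"
  define d where "d = (\<lambda>c. if c = a then 1 else (0::real))"
  have f: "(\<lambda>t. U G (\<pi>(I := (\<pi> I)(a := t)))) = (\<lambda>s. U G (\<pi>(I := \<lambda>c. x c + s * d c)))"
  proof
    fix t
    have "(\<pi> I)(a := t) = (\<lambda>c. x c + t * d c)" by (auto simp: x_def d_def)
    then show "U G (\<pi>(I := (\<pi> I)(a := t))) = U G (\<pi>(I := \<lambda>c. x c + t * d c))" by simp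
  qed
  have p: "\<pi>(I := \<lambda>c. x c + \<pi> I a * d c) = \<pi>"
    by (auto simp: x_def d_def fun_eq_iff)
  show ?thesis unfolding pdU_def f
    using DERIV_imp_deriv[OF U_line_deriv[of G \<pi> I x d "\<pi> I a"]] p by (simp add: d_def)
qed

lemma bet_diff: "bet G I (\<lambda>c. f c - g c) z k = bet G I f z k - bet G I g z k"
  by (simp add: bet_def)

lemma DD_diff: "DD G \<pi> I (\<lambda>c. f c - g c) = DD G \<pi> I f - DD G \<pi> I g"
  unfolding DD_def bet_diff
  by (simp add: left_diff_distrib sum_subtractf)

lemma line_deriv:
  "((\<lambda>s. U G (\<pi>(I := \<lambda>c. \<pi> I c + s * ((if c = b then 1 else 0) - (if c = a then 1 else 0)))))
     has_real_derivative pdU G \<pi> I b - pdU G \<pi> I a) (at 0)"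
proof -
  have "\<pi>(I := \<lambda>c. \<pi> I c + 0 * ((if c = b then 1 else 0) - (if c = a then 1 else (0::real)))) = \<pi>"
    by (auto simp: fun_eq_iff)
  then show ?thesis
    using U_line_deriv[of G \<pi> I "\<pi> I" "\<lambda>c. (if c = b then 1 else 0) - (if c = a then 1 else 0)" 0]
    by (simp add: DD_diff pdU_DD)
qed


lemma max_CDT:
  assumes wf: "wf_game G" and pm: "\<pi>m \<in> strategies G"
    and mx: "\<forall>\<pi>\<in>strategies G. U G \<pi> \<le> U G \<pi>m"
  shows "CDT_eq G \<pi>m"
proof -
  have "\<exists>lam::real. \<exists>\<mu>::'a \<Rightarrow> real. \<forall>a\<in>infoacts G I. 0 \<le> \<mu> a \<and> \<mu> a * \<pi>m I a = 0 \<and>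
           pdU G \<pi>m I a + \<mu> a = lam" if I: "I \<in> infosets G" for I
  proof -
    let ?A = "infoacts G I"
    have fin: "finite ?A" and ne: "?A \<noteq> {}" using infoacts_fin_ne[OF wf I] by auto
    have dist: "\<pi>m I \<in> distrib_on ?A" using pm I by (auto simp: strategies_def)
    have key: "pdU G \<pi>m I b \<le> pdU G \<pi>m I a"
      if a: "a \<in> ?A" and b: "b \<in> ?A" and pos: "0 < \<pi>m I a" for a b
    proof (rule ccontr)
      assume "\<not> ?thesis"
      then have lt: "0 < pdU G \<pi>m I b - pdU G \<pi>m I a" by simp
      then have ab: "a \<noteq> b" by auto
      define d where "d = (\<lambda>c. (if c = b then 1 else 0) - (if c = a then 1 else (0::real)))"
      define g where "g s = U G (\<pi>m(I := \<lambda>c. \<pi>m I c + s * d c))" for s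
      have "(g has_real_derivative pdU G \<pi>m I b - pdU G \<pi>m I a) (at 0)"
        unfolding g_def d_def by (rule line_deriv)
      from DERIV_pos_inc_right[OF this lt] obtain \<delta> where
        \<delta>: "\<delta> > 0" "\<And>h. h > 0 \<Longrightarrow> h < \<delta> \<Longrightarrow> g 0 < g (0 + h)" by blast
      define h where "h = min (\<delta>/2) (\<pi>m I a)"
      have h: "0 < h" "h < \<delta>" "h \<le> \<pi>m I a" using \<delta>(1) pos by (auto simp: h_def)
      have g0: "g 0 = U G \<pi>m" by (simp add: g_def)
      have "(\<lambda>c. \<pi>m I c + h * d c) \<in> distrib_on ?A"
      proof -
        have nn: "0 \<le> \<pi>m I c + h * d c" if "c \<in> ?A" for c
        proof -
          have "0 \<le> \<pi>m I c" using dist that by (auto simp: distrib_on_def)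
          then show ?thesis using h ab by (cases "c = a"; cases "c = b") (auto simp: d_def)
        qed
        have "sum (\<lambda>c. \<pi>m I c + h * d c) ?A = sum (\<pi>m I) ?A + h * sum d ?A"
          by (simp add: sum.distrib sum_distrib_left)
        also have "sum d ?A = 0" using fin a b by (simp add: d_def sum_subtractf)
        finally show ?thesis using dist nn by (auto simp: distrib_on_def)
      qed
      then have "\<pi>m(I := \<lambda>c. \<pi>m I c + h * d c) \<in> strategies G"
        using pm by (auto simp: strategies_def)
      then have "g h \<le> U G \<pi>m" using mx by (auto simp: g_def)
      moreover have "g 0 < g h" using \<delta>(2)[OF h(1) h(2)] by simp
      ultimately show False using g0 by simp
    qed
    define lam where "lam = Max (pdU G \<pi>m I ` ?A)"
    define \<mu> where "\<mu> a = lam - pdU G \<pi>m I a" for a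
    show ?thesis
    proof (intro exI ballI conjI)
      fix a assume a: "a \<in> ?A"
      show "0 \<le> \<mu> a" using fin a by (auto simp: \<mu>_def lam_def)
      show "\<mu> a * \<pi>m I a = 0"
      proof (cases "\<pi>m I a = 0")
        case False
        moreover have "0 \<le> \<pi>m I a" using dist a by (auto simp: distrib_on_def)
        ultimately have "0 < \<pi>m I a" by simp
        then have "lam = pdU G \<pi>m I a" unfolding lam_def using key a fin by (intro Max_eqI) auto
        then show ?thesis by (simp add: \<mu>_def)
      qed simp
      show "pdU G \<pi>m I a + \<mu> a = lam" by (simp add: \<mu>_def)
    qed
  qed
  then show ?thesis using pm by (auto simp: CDT_eq_def)
qed

lemma main:
  assumes wf: "wf_game G"
  shows "u_bEDT G = u_opt G \<and> u_bCDT G = u_opt G \<and> (\<exists>\<pi>m\<in>strategies G. U G \<pi>m = u_opt G)"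
proof -
  obtain \<pi>m where pm: "\<pi>m \<in> strategies G" and mx: "\<forall>\<pi>\<in>strategies G. U G \<pi> \<le> U G \<pi>m"
    using exists_max[OF wf] by blast
  have opt: "u_opt G = U G \<pi>m" unfolding u_opt_def
    by (rule cSup_eq_maximum) (use pm mx in auto)
  have edt: "EDT_eq G \<pi>m" unfolding EDT_eq_def
  proof (intro conjI ballI pm)
    fix I \<sigma> assume "I \<in> infosets G" "\<sigma> \<in> distrib_on (infoacts G I)"
    then have "\<pi>m(I := \<sigma>) \<in> strategies G" using pm by (auto simp: strategies_def)
    then show "U G (\<pi>m(I := \<sigma>)) \<le> U G \<pi>m" using mx by blast
  qed
  have cdt: "CDT_eq G \<pi>m" by (rule max_CDT[OF wf pm mx])
  have "u_bEDT G = U G \<pi>m" unfolding u_bEDT_def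
    by (rule cSup_eq_maximum) (use edt mx in \<open>auto simp: EDT_eq_def\<close>)
  moreover have "u_bCDT G = U G \<pi>m" unfolding u_bCDT_def
    by (rule cSup_eq_maximum) (use cdt mx in \<open>auto simp: CDT_eq_def\<close>)
  ultimately show ?thesis using opt pm by auto
qed

lemma pr1_simps[simp]:
  "nodes (pr1 G) = nodes G" "chance (pr1 G) = chance G" "cprob (pr1 G) = cprob G"
  "info (pr1 G) = (\<lambda>h. (info G h, obs G h))" "util (pr1 G) = util G"
  by (simp_all add: pr1_def)

lemma pr1_acts[simp]: "acts (pr1 G) h = acts G h"
  by (simp add: acts_def)

lemma pr1_leaves[simp]: "leaves (pr1 G) = leaves G"
  by (simp add: leaves_def)

lemma pr1_p1nodes[simp]: "p1nodes (pr1 G) = p1nodes G"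
  by (simp add: p1nodes_def)

lemma wf_pr1:
  assumes "wf_game G" shows "wf_game (pr1 G)"
proof -
  note w = assms[unfolded wf_game_def]
  have c: "\<forall>h\<in>p1nodes G. \<forall>h'\<in>p1nodes G. info G h = info G h' \<longrightarrow> acts G h = acts G h'"
    using w by (elim conjE) assumption
  have c': "\<forall>h\<in>p1nodes G. \<forall>h'\<in>p1nodes G. (info G h, obs G h) = (info G h', obs G h') \<longrightarrow> acts G h = acts G h'"
  proof (intro ballI impI)
    fix h h' assume h: "h \<in> p1nodes G" and h': "h' \<in> p1nodes G"
      and e: "(info G h, obs G h) = (info G h', obs G h')"
    from e have "info G h = info G h'" by simp
    then show "acts G h = acts G h'" using c[rule_format, OF h h'] by blast
  qed
  show ?thesis
    unfolding wf_game_def pr1_simps pr1_acts pr1_leaves pr1_p1nodes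
    using w c' by blast
qed

lemma reach_pr1: "reach (pr1 G) (\<lambda>Io. \<pi> (fst Io)) z = reach G \<pi> z"
  unfolding reach_def
  apply (rule prod.cong, rule refl)
  apply simp
  done

lemma transfer_pr1:
  assumes wf: "wf_game G" and p: "\<pi> \<in> strategies G"
  shows "(\<lambda>Io. \<pi> (fst Io)) \<in> strategies (pr1 G) \<and> U (pr1 G) (\<lambda>Io. \<pi> (fst Io)) = U G \<pi>"
proof
  show "(\<lambda>Io. \<pi> (fst Io)) \<in> strategies (pr1 G)"
    unfolding strategies_def
  proof (intro CollectI ballI)
    fix Io assume "Io \<in> infosets (pr1 G)"
    then obtain h where h: "h \<in> p1nodes G" "Io = (info G h, obs G h)"
      by (auto simp: infosets_def)
    have "infoacts (pr1 G) Io = acts G h"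
      using infoacts_eq[OF wf_pr1[OF wf], of h] h by simp
    moreover have "infoacts G (info G h) = acts G h" using infoacts_eq[OF wf h(1)] .
    moreover have "info G h \<in> infosets G" using h by (auto simp: infosets_def)
    ultimately show "\<pi> (fst Io) \<in> distrib_on (infoacts (pr1 G) Io)"
      using p h by (auto simp: strategies_def)
  qed
  show "U (pr1 G) (\<lambda>Io. \<pi> (fst Io)) = U G \<pi>"
    unfolding U_def by (simp add: reach_pr1)
qed

theorem proposition3:
  fixes G :: "('a, 'i) game"
  assumes "wf_game G"
  shows "VoR_opt G = VoR_bEDT G \<and> VoR_bEDT G = VoR_bCDT G \<and>
         (u_opt G > 0 \<longrightarrow> VoR_bCDT G \<ge> 1)"
proof -
  have m1: "u_bEDT G = u_opt G" "u_bCDT G = u_opt G" "\<exists>\<pi>m\<in>strategies G. U G \<pi>m = u_opt G"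
    using main[OF assms] by auto
  have m2: "u_bEDT (pr1 G) = u_opt (pr1 G)" "u_bCDT (pr1 G) = u_opt (pr1 G)"
    using main[OF wf_pr1[OF assms]] by auto
  have le: "u_opt G \<le> u_opt (pr1 G)"
  proof -
    obtain \<pi>m where pm: "\<pi>m \<in> strategies G" "U G \<pi>m = u_opt G" using m1(3) by blast
    obtain \<pi>p where pp: "\<pi>p \<in> strategies (pr1 G)" "\<forall>\<pi>\<in>strategies (pr1 G). U (pr1 G) \<pi> \<le> U (pr1 G) \<pi>p"
      using exists_max[OF wf_pr1[OF assms]] by blast
    have "u_opt (pr1 G) = U (pr1 G) \<pi>p" unfolding u_opt_def
      by (rule cSup_eq_maximum) (use pp in auto)
    moreover have "U G \<pi>m \<le> U (pr1 G) \<pi>p"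
      using transfer_pr1[OF assms pm(1)] pp(2) by metis
    ultimately show ?thesis using pm(2) by simp
  qed
  show ?thesis
    unfolding VoR_opt_def VoR_bEDT_def VoR_bCDT_def m1(1,2) m2
    using le by simp
qed

end
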